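(* Let $\ell_n>0$, $\sigma_{n,0}>0$, $\kappa_n\in\mathbb R$, $\sigma_{n,\pm1}\ge0$ for $n\in\mathbb N$, let $\sigma_n=\max(\sigma_{n,-1},\sigma_{n,1})$, and let $(x_n)_{n\in\mathbb N}$ be a positive solution with given $x_0\in\mathbb R$. Then: (i) for every $n\ge2$, $x_n\le \dfrac{\sqrt{\kappa_n^2+4\ell_n\sigma_{n,0}}-\kappa_n}{2\sigma_{n,0}}\le \sqrt{\ell_n/\sigma_{n,0}}+\kappa_n^-/\sigma_{n,0}$; (ii) if $n\ge2$ satisfies $\sigma_n\le\sigma_{n,0}<2\sigma_n$ and $-2(\sigma_{n,0}-\sigma_n)\sqrt{\ell_n}\le\kappa_n\sqrt{2\sigma_n-\sigma_{n,0}}$, then $x_n\le\sqrt{\ell_n}/\sqrt{2\sigma_n-\sigma_{n,0}}$; the same bound holds for $n=1$ if $\sigma_1\le\sigma_{1,0}<2\sigma_1$ and $-2(\sigma_{1,0}-\sigma_1)\sqrt{\ell_1}\le(\sigma_{1,-1}x_0+\kappa_1)\sqrt{2\sigma_1-\sigma_{1,0}}$.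
   Context: $\mathbb N=\{1,2,3,\dots\}$; $a^-=(|a|-a)/2$. A positive solution with given $x_0\in\mathbb R$ is a sequence $(x_n)_{n\in\mathbb N}$ of positive reals satisfying $\ell_n = x_n(\sigma_{n,1}x_{n+1}+\sigma_{n,0}x_n+\sigma_{n,-1}x_{n-1})+\kappa_n x_n$ for all $n\in\mathbb N$. *)

theory Defs
  imports Complex_Main
begin

definition negpart :: "real \<Rightarrow> real" where
  "negpart a = (\<bar>a\<bar> - a) / 2"

text \<open>Positive solution with given x 0: indices n \<in> \<nat> = {1,2,...} are the n \<ge> 1;
  sp = sigma_{n,1}, s0 = sigma_{n,0}, sm = sigma_{n,-1}.\<close>
definition positive_solution ::
  "(nat \<Rightarrow> real) \<Rightarrow> (nat \<Rightarrow> real) \<Rightarrow> (nat \<Rightarrow> real) \<Rightarrow> (nat \<Rightarrow> real) \<Rightarrow> (nat \<Rightarrow> real)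
   \<Rightarrow> (nat \<Rightarrow> real) \<Rightarrow> bool" where
  "positive_solution l sp s0 sm k x \<longleftrightarrow>
     (\<forall>n\<ge>1. x n > 0) \<and>
     (\<forall>n\<ge>1. l n = x n * (sp n * x (Suc n) + s0 n * x n + sm n * x (n - 1)) + k n * x n)"

end

theory Submission
  imports Defs
begin

lemma quadbound1:
  fixes s0 K l x :: real
  assumes "s0 > 0" "x > 0" "s0 * x\<^sup>2 + K * x \<le> l"
  shows "x \<le> (sqrt (K\<^sup>2 + 4 * l * s0) - K) / (2 * s0)"
proof -
  have "(2*s0*x+K)\<^sup>2 \<le> K\<^sup>2 + 4 * l * s0"
  proof -
    have "(2*s0*x+K)\<^sup>2 = 4*s0*(s0*x\<^sup>2 + K*x) + K\<^sup>2" by (simp add: power2_eq_square algebra_simps)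
    also have "\<dots> \<le> 4*s0*l + K\<^sup>2" using assms by simp
    finally show ?thesis by (simp add: algebra_simps)
  qed
  hence "sqrt ((2*s0*x+K)\<^sup>2) \<le> sqrt (K\<^sup>2 + 4 * l * s0)" using real_sqrt_le_mono by blast
  hence "2*s0*x+K \<le> sqrt (K\<^sup>2 + 4 * l * s0)" by simp
  thus ?thesis using assms by (simp add: field_simps)
qed

lemma quadbound2:
  fixes s0 K l :: real
  assumes "s0 > 0" "l > 0"
  shows "(sqrt (K\<^sup>2 + 4 * l * s0) - K) / (2 * s0) \<le> sqrt (l / s0) + negpart K / s0"
proof -
  have q: "sqrt (l*s0) ^2 = l*s0" using assms by simp
  have "K\<^sup>2 + 4 * l * s0 \<le> (\<bar>K\<bar> + 2 * sqrt (l*s0))\<^sup>2"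
    using q by (simp add: power2_eq_square algebra_simps)
  hence "sqrt (K\<^sup>2 + 4 * l * s0) \<le> sqrt ((\<bar>K\<bar> + 2 * sqrt (l*s0))\<^sup>2)"
    using real_sqrt_le_mono by blast
  also have "\<dots> = \<bar>K\<bar> + 2 * sqrt (l*s0)" using assms by simp
  finally have "sqrt (K\<^sup>2 + 4 * l * s0) \<le> \<bar>K\<bar> + 2 * sqrt (l*s0)" .
  moreover have "sqrt (l / s0) = sqrt (l*s0) / s0"
    using assms by (simp add: real_sqrt_divide real_sqrt_mult field_simps)
  ultimately show ?thesis using assms by (simp add: negpart_def field_simps)
qed

lemma quadbound3:
  fixes s0 K a b x :: real
  assumes "s0 > 0" "a > 0" "b > 0" "x > 0" "s0 * x\<^sup>2 + K * x \<le> a\<^sup>2"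
    and "-(s0 - b\<^sup>2) * a \<le> K * b"
  shows "x \<le> a / b"
proof (rule ccontr)
  assume "\<not> ?thesis"
  hence xy: "x > a/b" by simp
  define y where "y = a/b"
  have yp: "y > 0" using assms by (simp add: y_def)
  have "-(s0 - b\<^sup>2) * a * a \<le> K * b * a" using assms(6) assms(2) by (simp add: mult_right_mono)
  hence "s0 * a\<^sup>2 + K * a * b - a\<^sup>2 * b\<^sup>2 \<ge> 0" by (simp add: power2_eq_square algebra_simps)
  moreover have "(s0 * y\<^sup>2 + K * y - a\<^sup>2) * b\<^sup>2 = s0 * a\<^sup>2 + K * a * b - a\<^sup>2 * b\<^sup>2"
    using assms by (simp add: y_def power2_eq_square field_simps)
  ultimately have "(s0 * y\<^sup>2 + K * y - a\<^sup>2) * b\<^sup>2 \<ge> 0" by simp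
  hence fy: "s0 * y\<^sup>2 + K * y \<ge> a\<^sup>2" using assms
    by (simp add: zero_le_mult_iff)
  have "y * (s0 * y + K) \<ge> a\<^sup>2" using fy by (simp add: power2_eq_square algebra_simps)
  have "s0*y + K > 0"
  proof (rule ccontr)
    assume "\<not> s0*y + K > 0"
    hence "y * (s0 * y + K) \<le> 0" using yp by (simp add: mult_nonneg_nonpos)
    moreover have "a\<^sup>2 > 0" using assms(2) by simp
    ultimately show False using \<open>y * (s0 * y + K) \<ge> a\<^sup>2\<close> by linarith
  qed
  moreover have "s0 * x > 0" using assms by simp
  ultimately have "s0*(x+y) + K > 0" by (simp add: algebra_simps)
  hence "(x - y) * (s0*(x+y)+K) > 0" using xy y_def by simp
  hence "s0 * x\<^sup>2 + K * x > s0 * y\<^sup>2 + K * y" by (simp add: power2_eq_square algebra_simps)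
  thus False using fy assms(5) by simp
qed

lemma quadbound4:
  fixes s0 s K l x :: real
  assumes "s0 > 0" "l > 0" "x > 0" "s0 * x\<^sup>2 + K * x \<le> l" "s0 < 2 * s"
    and "- 2 * (s0 - s) * sqrt l \<le> K * sqrt (2 * s - s0)"
  shows "x \<le> sqrt l / sqrt (2 * s - s0)"
proof (rule quadbound3[of s0 "sqrt l" "sqrt (2*s-s0)" x K])
  show "- (s0 - (sqrt (2 * s - s0))\<^sup>2) * sqrt l \<le> K * sqrt (2 * s - s0)"
    using assms by simp
qed (use assms in auto)

theorem mainTheorem6:
  fixes l sp s0 sm k x :: "nat \<Rightarrow> real"
  assumes l_pos: "\<And>n. n \<ge> 1 \<Longrightarrow> l n > 0"
    and s0_pos: "\<And>n. n \<ge> 1 \<Longrightarrow> s0 n > 0"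
    and sp_nn: "\<And>n. n \<ge> 1 \<Longrightarrow> sp n \<ge> 0"
    and sm_nn: "\<And>n. n \<ge> 1 \<Longrightarrow> sm n \<ge> 0"
    and sol: "positive_solution l sp s0 sm k x"
  defines "s \<equiv> (\<lambda>n. max (sm n) (sp n))"
  shows "(\<forall>n\<ge>2. x n \<le> (sqrt ((k n)\<^sup>2 + 4 * l n * s0 n) - k n) / (2 * s0 n)
              \<and> (sqrt ((k n)\<^sup>2 + 4 * l n * s0 n) - k n) / (2 * s0 n)
                   \<le> sqrt (l n / s0 n) + negpart (k n) / s0 n)
       \<and> (\<forall>n\<ge>2. s n \<le> s0 n \<and> s0 n < 2 * s n \<and>
              - 2 * (s0 n - s n) * sqrt (l n) \<le> k n * sqrt (2 * s n - s0 n)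
              \<longrightarrow> x n \<le> sqrt (l n) / sqrt (2 * s n - s0 n))
       \<and> (s 1 \<le> s0 1 \<and> s0 1 < 2 * s 1 \<and>
              - 2 * (s0 1 - s 1) * sqrt (l 1) \<le> (sm 1 * x 0 + k 1) * sqrt (2 * s 1 - s0 1)
              \<longrightarrow> x 1 \<le> sqrt (l 1) / sqrt (2 * s 1 - s0 1))"
proof -
  have xpos: "\<And>n. n \<ge> 1 \<Longrightarrow> x n > 0" and eq: "\<And>n. n \<ge> 1 \<Longrightarrow>
     l n = x n * (sp n * x (Suc n) + s0 n * x n + sm n * x (n - 1)) + k n * x n"
    using sol unfolding positive_solution_def by auto
  have key: "s0 n * (x n)\<^sup>2 + k n * x n \<le> l n" if "n \<ge> 2" for n
  proof -
    have "x (n-1) > 0" using xpos[of "n-1"] that by simp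
    have "sp n * x (Suc n) \<ge> 0" "sm n * x (n-1) \<ge> 0"
      using that xpos[of "Suc n"] \<open>x (n-1) > 0\<close> sp_nn[of n] sm_nn[of n] by (auto intro: mult_nonneg_nonneg)
    hence "x n * (sp n * x (Suc n) + sm n * x (n - 1)) \<ge> 0" using xpos[of n] that by simp
    thus ?thesis using eq[of n] that by (simp add: power2_eq_square algebra_simps)
  qed
  have key1: "s0 1 * (x 1)\<^sup>2 + (sm 1 * x 0 + k 1) * x 1 \<le> l 1"
  proof -
    have "sp 1 * x 2 \<ge> 0" using xpos[of 2] sp_nn[of 1] by auto
    hence "x 1 * (sp 1 * x 2) \<ge> 0" using xpos[of 1] by simp
    thus ?thesis using eq[of 1] by (simp add: power2_eq_square algebra_simps numeral_2_eq_2)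
  qed
  show ?thesis
  proof (intro conjI allI impI)
    fix n :: nat assume "n \<ge> 2"
    then show "x n \<le> (sqrt ((k n)\<^sup>2 + 4 * l n * s0 n) - k n) / (2 * s0 n)"
      using quadbound1 key xpos s0_pos by simp
  next
    fix n :: nat assume "n \<ge> 2"
    then show "(sqrt ((k n)\<^sup>2 + 4 * l n * s0 n) - k n) / (2 * s0 n)
                   \<le> sqrt (l n / s0 n) + negpart (k n) / s0 n"
      using quadbound2 l_pos s0_pos by simp
  next
    fix n :: nat assume "n \<ge> 2" and h: "s n \<le> s0 n \<and> s0 n < 2 * s n \<and>
              - 2 * (s0 n - s n) * sqrt (l n) \<le> k n * sqrt (2 * s n - s0 n)"
    then show "x n \<le> sqrt (l n) / sqrt (2 * s n - s0 n)"
      using quadbound4[of "s0 n" "l n" "x n" "k n" "s n"] key xpos s0_pos l_pos by simp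
  next
    assume h: "s 1 \<le> s0 1 \<and> s0 1 < 2 * s 1 \<and>
              - 2 * (s0 1 - s 1) * sqrt (l 1) \<le> (sm 1 * x 0 + k 1) * sqrt (2 * s 1 - s0 1)"
    then show "x 1 \<le> sqrt (l 1) / sqrt (2 * s 1 - s0 1)"
      using quadbound4[of "s0 1" "l 1" "x 1" "sm 1 * x 0 + k 1" "s 1"] key1 xpos s0_pos l_pos by simp
  qed
qed

end
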